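(* Let $D=(E,\mathcal{F})$ be a connected even normal binary delta-matroid with $E\neq\emptyset$. Then ${}^{\partial}w_{D}(z)=mz^{k}$ for some integers $m,k$ (i.e. the twist polynomial has exactly one term) if and only if the intersection graph $G_D$ is a complete graph of odd order.
   Context: A delta-matroid is a set system $(E,\mathcal{F})$, $\mathcal{F}\ne\emptyset$ a family of subsets of finite $E$, satisfying: for all $X,Y\in\mathcal{F}$ and $u\in X\Delta Y$ there is $v\in X\Delta Y$ with $X\Delta\{u,v\}\in\mathcal{F}$. Twist: $D*A=(E,\{A\Delta X:X\in\mathcal{F}\})$. Width $w(D)$ = maximum minus minimum cardinality of feasible sets; twist polynomial ${}^{\partial}w_{D}(z)=\sum_{A\subseteq E}z^{w(D*A)}$. $D$ is normal if $\emptyset\in\mathcal{F}$, and even if $|F\Delta F'|$ is even for all $F,F'\in\mathcal{F}$. The direct sum of delta-matroids on disjoint ground sets is $(E\cup E',\{F\cup F'\})$; $D$ is disconnected if it is a direct sum of two delta-matroids with nonempty ground sets, connected otherwise. For a symmetric matrix $C$ over $GF(2)$ indexed by $E$, $D(C)=(E,\{A\subseteq E: C[A]\text{ nonsingular}\})$ ($C[A]$ principal submatrix, $C[\emptyset]$ nonsingular by convention). $D$ is binary if some twist of it is isomorphic to some $D(C)$. A normal binary $D$ equals $D(C)$ for a unique symmetric $C$; its intersection graph $G_D$ has vertex set $E$, distinct $u,v$ adjacent iff $C_{u,v}=1$, and a loop at $v$ iff $C_{v,v}=1$. For even $D$, $G_D$ is a simple graph, and $D$ is connected iff $G_D$ is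 connected. *)

theory Defs
  imports "HOL-Library.Z2" "HOL-Combinatorics.Permutations"
          "HOL-Computational_Algebra.Polynomial"
begin

definition symdiff :: "'a set \<Rightarrow> 'a set \<Rightarrow> 'a set" (infixl "\<triangle>" 65) where
  "X \<triangle> Y = (X - Y) \<union> (Y - X)"

definition delta_matroid :: "'a set \<Rightarrow> 'a set set \<Rightarrow> bool" where
  "delta_matroid E F \<longleftrightarrow> finite E \<and> F \<noteq> {} \<and> (\<forall>X\<in>F. X \<subseteq> E) \<and>
     (\<forall>X\<in>F. \<forall>Y\<in>F. \<forall>u\<in>X \<triangle> Y. \<exists>v\<in>X \<triangle> Y. X \<triangle> {u, v} \<in> F)"

definition twist :: "'a set set \<Rightarrow> 'a set \<Rightarrow> 'a set set" where
  "twist F A = (\<lambda>X. A \<triangle> X) ` F"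

definition width :: "'a set set \<Rightarrow> nat" where
  "width F = Max (card ` F) - Min (card ` F)"

definition twist_poly :: "'a set \<Rightarrow> 'a set set \<Rightarrow> int poly" where
  "twist_poly E F = (\<Sum>A\<in>Pow E. monom 1 (width (twist F A)))"

definition normal :: "'a set set \<Rightarrow> bool" where
  "normal F \<longleftrightarrow> {} \<in> F"

definition even_dm :: "'a set set \<Rightarrow> bool" where
  "even_dm F \<longleftrightarrow> (\<forall>X\<in>F. \<forall>Y\<in>F. even (card (X \<triangle> Y)))"

definition direct_sum :: "'a set set \<Rightarrow> 'a set set \<Rightarrow> 'a set set" where
  "direct_sum F1 F2 = {X \<union> Y | X Y. X \<in> F1 \<and> Y \<in> F2}"

definition disconnected :: "'a set \<Rightarrow> 'a set set \<Rightarrow> bool" where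
  "disconnected E F \<longleftrightarrow> (\<exists>E1 E2 F1 F2. E1 \<noteq> {} \<and> E2 \<noteq> {} \<and> E1 \<inter> E2 = {} \<and>
      E = E1 \<union> E2 \<and> delta_matroid E1 F1 \<and> delta_matroid E2 F2 \<and> F = direct_sum F1 F2)"

definition connected_dm :: "'a set \<Rightarrow> 'a set set \<Rightarrow> bool" where
  "connected_dm E F \<longleftrightarrow> \<not> disconnected E F"

definition det_sub :: "('a \<Rightarrow> 'a \<Rightarrow> bit) \<Rightarrow> 'a set \<Rightarrow> bit" where
  "det_sub C A = (\<Sum>p | p permutes A. of_int (sign p) * (\<Prod>i\<in>A. C i (p i)))"

definition symmetric_on :: "'a set \<Rightarrow> ('a \<Rightarrow> 'a \<Rightarrow> bit) \<Rightarrow> bool" where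
  "symmetric_on E C \<longleftrightarrow> (\<forall>i\<in>E. \<forall>j\<in>E. C i j = C j i)"

definition dm_of_matrix :: "'a set \<Rightarrow> ('a \<Rightarrow> 'a \<Rightarrow> bit) \<Rightarrow> 'a set set" where
  "dm_of_matrix E C = {A. A \<subseteq> E \<and> det_sub C A \<noteq> 0}"

text \<open>Binary: some twist equals D(C) up to isomorphism; the isomorphism is absorbed
  by re-indexing C along the bijection, so C is indexed by E itself.\<close>
definition binary :: "'a set \<Rightarrow> 'a set set \<Rightarrow> bool" where
  "binary E F \<longleftrightarrow> (\<exists>A\<subseteq>E. \<exists>C. symmetric_on E C \<and> twist F A = dm_of_matrix E C)"

definition repr_matrix :: "'a set \<Rightarrow> 'a set set \<Rightarrow> ('a \<Rightarrow> 'a \<Rightarrow> bit)" where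
  "repr_matrix E F = (THE C. symmetric_on E C \<and> (\<forall>i j. (i \<notin> E \<or> j \<notin> E) \<longrightarrow> C i j = 0)
                          \<and> F = dm_of_matrix E C)"

definition ig_adj :: "'a set \<Rightarrow> 'a set set \<Rightarrow> 'a \<Rightarrow> 'a \<Rightarrow> bool" where
  "ig_adj E F u v \<longleftrightarrow> u \<in> E \<and> v \<in> E \<and> u \<noteq> v \<and> repr_matrix E F u v = 1"

definition ig_loop :: "'a set \<Rightarrow> 'a set set \<Rightarrow> 'a \<Rightarrow> bool" where
  "ig_loop E F v \<longleftrightarrow> v \<in> E \<and> repr_matrix E F v v = 1"

definition ig_complete_odd :: "'a set \<Rightarrow> 'a set set \<Rightarrow> bool" where
  "ig_complete_odd E F \<longleftrightarrow> (\<forall>v\<in>E. \<not> ig_loop E F v) \<and>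
     (\<forall>u\<in>E. \<forall>v\<in>E. u \<noteq> v \<longrightarrow> ig_adj E F u v) \<and> odd (card E)"

end

theory Submission
  imports Defs "Jordan_Normal_Form.Determinant"
begin



declare add_bit_eq_xor[simp del] mult_bit_eq_and[simp del]

definition ker_on :: "('a \<Rightarrow> 'a \<Rightarrow> bit) \<Rightarrow> 'a set \<Rightarrow> ('a \<Rightarrow> bit) \<Rightarrow> bool" where
  "ker_on C T y \<longleftrightarrow> (\<forall>x. x \<notin> T \<longrightarrow> y x = 0) \<and> (\<forall>x\<in>T. (\<Sum>j\<in>T. C x j * y j) = 0)"

definition ns :: "('a \<Rightarrow> 'a \<Rightarrow> bit) \<Rightarrow> 'a set \<Rightarrow> bool" where
  "ns C T \<longleftrightarrow> (\<forall>y. ker_on C T y \<longrightarrow> y = (\<lambda>_. 0))"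

lemma of_int_sign_bit[simp]: "(of_int (sign p) :: bit) = 1"
  by (simp add: sign_def)

lemma det_sub_ns:
  assumes fin: "finite X"
  shows "det_sub C X \<noteq> 0 \<longleftrightarrow> ns C X"
proof -
  define n where "n = card X"
  obtain f where f: "bij_betw f {0..<n} X" using ex_bij_betw_nat_finite[OF fin] n_def by blast
  define g where "g = inv_into {0..<n} f"
  have gf: "g (f i) = i" if "i < n" for i
    using f that unfolding g_def by (simp add: bij_betw_inv_into_left)
  have fg: "f (g x) = x" "g x < n" if "x \<in> X" for x
    using f that unfolding g_def by (auto simp: bij_betw_inv_into_right bij_betw_def inv_into_into)
  have fX: "f i \<in> X" if "i < n" for i using f that by (auto simp: bij_betw_def)
  define M where "M = mat n n (\<lambda>(i,j). C (f i) (f j))"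
  have M: "M \<in> carrier_mat n n" unfolding M_def by simp
  let ?phi = "\<lambda>\<pi> x. if x \<in> X then f (\<pi> (inv_into {0..<n} f x)) else x"
  have bp: "bij_betw ?phi {\<pi>. \<pi> permutes {0..<n}} {\<pi>. \<pi> permutes X}"
    by (rule bij_betw_permutations[OF f])
  have "det_sub C X = (\<Sum>q\<in>{\<pi>. \<pi> permutes X}. \<Prod>x\<in>X. C x (q x))"
    unfolding det_sub_def by simp
  also have "\<dots> = (\<Sum>p\<in>{\<pi>. \<pi> permutes {0..<n}}. \<Prod>x\<in>X. C x (?phi p x))"
    by (rule sum.reindex_bij_betw[OF bp, symmetric])
  also have "\<dots> = (\<Sum>p\<in>{\<pi>. \<pi> permutes {0..<n}}. \<Prod>i\<in>{0..<n}. M $$ (i, p i))"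
  proof (rule sum.cong[OF refl])
    fix p assume p: "p \<in> {\<pi>. \<pi> permutes {0..<n}}"
    have "(\<Prod>x\<in>X. C x (?phi p x)) = (\<Prod>i\<in>{0..<n}. C (f i) (?phi p (f i)))"
      by (rule prod.reindex_bij_betw[OF f, symmetric])
    also have "\<dots> = (\<Prod>i\<in>{0..<n}. M $$ (i, p i))"
    proof (rule prod.cong[OF refl])
      fix i assume i: "i \<in> {0..<n}"
      have pi: "p i < n" using p i permutes_in_image by fastforce
      show "C (f i) (?phi p (f i)) = M $$ (i, p i)"
        using i pi fX gf unfolding M_def g_def[symmetric] by auto
    qed
    finally show "(\<Prod>x\<in>X. C x (?phi p x)) = (\<Prod>i\<in>{0..<n}. M $$ (i, p i))" .
  qed
  also have "\<dots> = det M" unfolding det_def'[OF M] by simp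
  finally have dM: "det_sub C X = det M" .
  have "det M = 0 \<longleftrightarrow> \<not> ns C X"
  proof
    assume "det M = 0"
    then obtain v where v: "v \<in> carrier_vec n" "v \<noteq> 0\<^sub>v n" "M *\<^sub>v v = 0\<^sub>v n"
      using det_0_iff_vec_prod_zero[OF M] by blast
    define y where "y = (\<lambda>x. if x \<in> X then v $ (g x) else 0)"
    have "ker_on C X y" unfolding ker_on_def
    proof (intro conjI allI impI ballI)
      fix x assume "x \<notin> X" thus "y x = 0" unfolding y_def by simp
    next
      fix x assume x: "x \<in> X"
      have "0 = (M *\<^sub>v v) $ (g x)" using v(3) fg(2)[OF x] by simp
      also have "\<dots> = (\<Sum>j\<in>{0..<n}. C x (f j) * v $ j)"
        using fg[OF x] v(1) by (simp add: scalar_prod_def M_def)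
      also have "\<dots> = (\<Sum>j\<in>{0..<n}. C x (f j) * y (f j))"
        by (rule sum.cong) (auto simp: y_def fX gf)
      also have "\<dots> = (\<Sum>j\<in>X. C x j * y j)"
        by (rule sum.reindex_bij_betw[OF f])
      finally show "(\<Sum>j\<in>X. C x j * y j) = 0" by simp
    qed
    moreover have "y \<noteq> (\<lambda>_. 0)"
    proof
      assume y0: "y = (\<lambda>_. 0)"
      have "v = 0\<^sub>v n"
      proof (rule eq_vecI)
        fix i assume "i < dim_vec (0\<^sub>v n)"
        hence i: "i < n" by simp
        have "y (f i) = 0" using y0 by simp
        thus "v $ i = 0\<^sub>v n $ i" using i fX gf by (simp add: y_def)
      qed (use v(1) in simp)
      with v(2) show False by simp
    qed
    ultimately show "\<not> ns C X" unfolding ns_def by blast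
  next
    assume "\<not> ns C X"
    then obtain y where y: "ker_on C X y" "y \<noteq> (\<lambda>_. 0)" unfolding ns_def by blast
    define v where "v = vec n (\<lambda>i. y (f i))"
    have vc: "v \<in> carrier_vec n" unfolding v_def by simp
    have "v \<noteq> 0\<^sub>v n"
    proof
      assume v0: "v = 0\<^sub>v n"
      have "y = (\<lambda>_. 0)"
      proof
        fix x show "y x = 0"
        proof (cases "x \<in> X")
          case True
          have "v $ (g x) = 0" using v0 fg[OF True] by simp
          thus ?thesis using fg[OF True] by (simp add: v_def)
        next
          case False thus ?thesis using y(1) unfolding ker_on_def by simp
        qed
      qed
      with y(2) show False by simp
    qed
    moreover have "M *\<^sub>v v = 0\<^sub>v n"
    proof (rule eq_vecI)
      fix i assume "i < dim_vec (0\<^sub>v n)"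
      hence i: "i < n" by simp
      have "(M *\<^sub>v v) $ i = (\<Sum>j\<in>{0..<n}. C (f i) (f j) * y (f j))"
        using i by (simp add: scalar_prod_def M_def v_def)
      also have "\<dots> = (\<Sum>j\<in>X. C (f i) j * y j)"
        by (rule sum.reindex_bij_betw[OF f])
      also have "\<dots> = 0" using y(1) fX[OF i] unfolding ker_on_def by blast
      finally show "(M *\<^sub>v v) $ i = 0\<^sub>v n $ i" using i by simp
    qed (simp add: M_def)
    ultimately show "det M = 0" using det_0_iff_vec_prod_zero[OF M] vc by blast
  qed
  thus ?thesis using dM by simp
qed




lemma bit_add_self[simp]: "(a::bit) + a = 0"
  by (cases a) (simp_all add: add_bit_eq_xor)

lemma bit_add_eq0: "(a::bit) + b = 0 \<longleftrightarrow> a = b"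
  by (cases a; cases b) (simp_all add: add_bit_eq_xor)

lemma bit_cases_01: "(a::bit) = 0 \<or> a = 1" by (cases a) simp_all

definition vadd :: "('a \<Rightarrow> bit) \<Rightarrow> ('a \<Rightarrow> bit) \<Rightarrow> ('a \<Rightarrow> bit)" where
  "vadd x y = (\<lambda>i. x i + y i)"

definition supp_in :: "'a set \<Rightarrow> ('a \<Rightarrow> bit) \<Rightarrow> bool" where
  "supp_in T y \<longleftrightarrow> (\<forall>i. i \<notin> T \<longrightarrow> y i = 0)"

lemma sum_supp:
  assumes "finite S" "T \<subseteq> S" "supp_in T y"
  shows "(\<Sum>j\<in>T. C i j * y j) = (\<Sum>j\<in>S. C i j * y j)"
  by (rule sum.mono_neutral_left) (use assms in \<open>auto simp: supp_in_def\<close>)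

lemma ker_on_supp: "ker_on C T y \<Longrightarrow> supp_in T y"
  unfolding ker_on_def supp_in_def by auto

lemma ker_on_iff:
  assumes "finite E" "T \<subseteq> E" "supp_in E y"
  shows "ker_on C T y \<longleftrightarrow> (\<forall>i\<in>E-T. y i = 0) \<and> (\<forall>i\<in>T. (\<Sum>j\<in>E. C i j * y j) = 0)"
proof
  assume k: "ker_on C T y"
  hence s: "supp_in T y" by (rule ker_on_supp)
  have "\<forall>i\<in>T. (\<Sum>j\<in>E. C i j * y j) = 0"
    using k sum_supp[OF assms(1,2) s, where C=C] unfolding ker_on_def by metis
  thus "(\<forall>i\<in>E-T. y i = 0) \<and> (\<forall>i\<in>T. (\<Sum>j\<in>E. C i j * y j) = 0)"
    using k unfolding ker_on_def by auto
next
  assume h: "(\<forall>i\<in>E-T. y i = 0) \<and> (\<forall>i\<in>T. (\<Sum>j\<in>E. C i j * y j) = 0)"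
  hence s: "supp_in T y" using assms(3) unfolding supp_in_def by auto
  show "ker_on C T y"
    using h sum_supp[OF assms(1,2) s, where C=C] s unfolding ker_on_def supp_in_def by auto
qed

lemma ns_single: "ns C {a} \<longleftrightarrow> C a a \<noteq> 0"
proof
  assume "ns C {a}"
  show "C a a \<noteq> 0"
  proof
    assume c: "C a a = 0"
    have "ker_on C {a} (\<lambda>i. if i = a then 1 else 0)" unfolding ker_on_def using c by auto
    with \<open>ns C {a}\<close> have "(\<lambda>i. if i = a then 1 else (0::bit)) = (\<lambda>_. 0)" unfolding ns_def by blast
    hence "(1::bit) = 0" by (metis (full_types))
    thus False by simp
  qed
next
  assume c: "C a a \<noteq> 0"
  show "ns C {a}" unfolding ns_def
  proof (intro allI impI)
    fix y assume k: "ker_on C {a} y"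
    hence "C a a * y a = 0" unfolding ker_on_def by auto
    hence "y a = 0" using c by simp
    with k show "y = (\<lambda>_. 0)" unfolding ker_on_def by auto
  qed
qed

lemma ns_pair0:
  assumes "a \<noteq> b" "C a a = 0" "C b b = 0" "C a b = C b a"
  shows "ns C {a,b} \<longleftrightarrow> C a b \<noteq> 0"
proof
  assume n: "ns C {a,b}"
  show "C a b \<noteq> 0"
  proof
    assume c: "C a b = 0"
    have "ker_on C {a,b} (\<lambda>i. if i = a then 1 else 0)" unfolding ker_on_def using c assms by auto
    with n have "(\<lambda>i. if i = a then 1 else (0::bit)) = (\<lambda>_. 0)" unfolding ns_def by blast
    hence "(1::bit) = 0" by (metis (full_types))
    thus False by simp
  qed
next
  assume c: "C a b \<noteq> 0"
  show "ns C {a,b}" unfolding ns_def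
  proof (intro allI impI)
    fix y assume k: "ker_on C {a,b} y"
    have "C a a * y a + C a b * y b = 0" using k assms(1) unfolding ker_on_def by auto
    hence "y b = 0" using c assms by simp
    moreover have "C b a * y a + C b b * y b = 0" using k assms(1) unfolding ker_on_def by auto
    hence "y a = 0" using c assms by simp
    ultimately show "y = (\<lambda>_. 0)" using k unfolding ker_on_def by auto
  qed
qed




lemma finite_supp_in:
  assumes "finite E" shows "finite {x :: 'a \<Rightarrow> bit. supp_in E x}"
proof -
  have "inj_on (\<lambda>x. {i. x i = 1}) {x. supp_in E x}"
  proof (rule inj_onI)
    fix x y assume x: "x \<in> {x. supp_in E x}" and y: "y \<in> {x. supp_in E x}"
      and e: "{i. x i = 1} = {i. y i = 1}"
    show "x = y"
    proof
      fix i
      have "x i = 1 \<longleftrightarrow> y i = 1" using e by blast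
      thus "x i = y i" by (metis bit_not_one_iff)
    qed
  qed
  moreover have "(\<lambda>x. {i. x i = 1}) ` {x. supp_in E x} \<subseteq> Pow E"
    by (auto simp: supp_in_def)
  ultimately show ?thesis using assms
    by (meson finite_Pow_iff finite_subset inj_on_finite)
qed

locale piv =
  fixes E :: "'a set" and C0 :: "'a \<Rightarrow> 'a \<Rightarrow> bit" and A :: "'a set"
  assumes fin: "finite E" and sym: "symmetric_on E C0" and AE: "A \<subseteq> E" and nsA: "ns C0 A"
begin

definition V where "V = {x. supp_in E x}"
definition W where "W x = (\<lambda>i. if i \<in> E then (\<Sum>j\<in>E. C0 i j * x j) else 0)"
definition psi where "psi x = (\<lambda>i. if i \<in> A then W x i else x i)"
definition tau where "tau x = (\<lambda>i. if i \<in> A then x i else W x i)"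

lemma W_add: "W (vadd x y) = vadd (W x) (W y)"
  unfolding W_def vadd_def by (auto simp: distrib_left sum.distrib)

lemma psi_add: "psi (vadd x y) = vadd (psi x) (psi y)"
  unfolding psi_def using W_add by (auto simp: vadd_def fun_eq_iff)

lemma tau_add: "tau (vadd x y) = vadd (tau x) (tau y)"
  unfolding tau_def using W_add by (auto simp: vadd_def fun_eq_iff)

lemma W_zero[simp]: "W (\<lambda>_. 0) = (\<lambda>_. 0)" unfolding W_def by auto
lemma psi_zero[simp]: "psi (\<lambda>_. 0) = (\<lambda>_. 0)" unfolding psi_def by auto
lemma tau_zero[simp]: "tau (\<lambda>_. 0) = (\<lambda>_. 0)" unfolding tau_def by auto

lemma W_V: "W x \<in> V" unfolding W_def V_def supp_in_def by auto
lemma psi_V: "x \<in> V \<Longrightarrow> psi x \<in> V"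
  using AE unfolding psi_def V_def supp_in_def by auto
lemma tau_V: "x \<in> V \<Longrightarrow> tau x \<in> V"
  using AE W_V unfolding tau_def V_def supp_in_def by auto
lemma vadd_V: "x \<in> V \<Longrightarrow> y \<in> V \<Longrightarrow> vadd x y \<in> V"
  unfolding V_def supp_in_def vadd_def by auto

lemma psi_out: "i \<notin> A \<Longrightarrow> psi x i = x i" unfolding psi_def by simp

lemma vadd_eq0: "vadd x y = (\<lambda>_. 0) \<longleftrightarrow> x = y"
  unfolding vadd_def by (auto simp: fun_eq_iff bit_add_eq0)

lemma psi_kernel:
  assumes x: "x \<in> V" and p: "psi x = (\<lambda>_. 0)" shows "x = (\<lambda>_. 0)"
proof -
  have sA: "supp_in A x"
  proof (unfold supp_in_def, intro allI impI)
    fix i assume i: "i \<notin> A"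
    show "x i = 0"
    proof (cases "i \<in> E")
      case True thus ?thesis using p i psi_out[OF i, of x] by (metis)
    next
      case False thus ?thesis using x by (simp add: V_def supp_in_def)
    qed
  qed
  have "ker_on C0 A x" unfolding ker_on_def
  proof (intro conjI allI impI ballI)
    fix i assume "i \<notin> A" thus "x i = 0" using sA by (simp add: supp_in_def)
  next
    fix i assume i: "i \<in> A"
    have "(\<Sum>j\<in>A. C0 i j * x j) = (\<Sum>j\<in>E. C0 i j * x j)"
      by (rule sum_supp[OF fin AE sA])
    also have "\<dots> = psi x i" using i AE unfolding psi_def W_def by auto
    finally show "(\<Sum>j\<in>A. C0 i j * x j) = 0" using p by simp
  qed
  thus ?thesis using nsA unfolding ns_def by blast
qed

lemma psi_inj: "inj_on psi V"
proof (rule inj_onI)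
  fix x y assume x: "x \<in> V" and y: "y \<in> V" and e: "psi x = psi y"
  have "psi (vadd x y) = (\<lambda>_. 0)" using e psi_add vadd_eq0 by metis
  hence "vadd x y = (\<lambda>_. 0)" using psi_kernel vadd_V[OF x y] by blast
  thus "x = y" using vadd_eq0 by blast
qed

lemma finV: "finite V" unfolding V_def by (rule finite_supp_in[OF fin])

lemma psi_surj: "psi ` V = V"
  by (rule endo_inj_surj[OF finV]) (use psi_V psi_inj in auto)

definition pinv where "pinv = inv_into V psi"

lemma pinv_V: "y \<in> V \<Longrightarrow> pinv y \<in> V"
  unfolding pinv_def using psi_surj by (metis inv_into_into)
lemma psi_pinv: "y \<in> V \<Longrightarrow> psi (pinv y) = y"
  unfolding pinv_def using psi_surj by (metis f_inv_into_f)
lemma pinv_psi: "x \<in> V \<Longrightarrow> pinv (psi x) = x"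
  unfolding pinv_def using psi_inj by (metis inv_into_f_f)

definition Phi where "Phi y = tau (pinv y)"

lemma pinv_add: "x \<in> V \<Longrightarrow> y \<in> V \<Longrightarrow> pinv (vadd x y) = vadd (pinv x) (pinv y)"
proof -
  assume x: "x \<in> V" and y: "y \<in> V"
  have "psi (vadd (pinv x) (pinv y)) = vadd x y" using psi_add psi_pinv x y by metis
  hence "pinv (vadd x y) = pinv (psi (vadd (pinv x) (pinv y)))" by simp
  also have "\<dots> = vadd (pinv x) (pinv y)" using pinv_psi vadd_V pinv_V x y by metis
  finally show ?thesis .
qed

lemma Phi_add: "x \<in> V \<Longrightarrow> y \<in> V \<Longrightarrow> Phi (vadd x y) = vadd (Phi x) (Phi y)"
  unfolding Phi_def using pinv_add tau_add by metis

lemma zero_V: "(\<lambda>_. 0) \<in> V" unfolding V_def supp_in_def by simp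

lemma Phi_zero: "Phi (\<lambda>_. 0) = (\<lambda>_. 0)"
  unfolding Phi_def using pinv_psi[OF zero_V] by simp

definition delta :: "'a \<Rightarrow> 'a \<Rightarrow> bit" where "delta j = (\<lambda>i. if i = j then 1 else 0)"

definition Cp where "Cp i j = (if i \<in> E \<and> j \<in> E then Phi (delta j) i else 0)"

lemma delta_V: "j \<in> E \<Longrightarrow> delta j \<in> V" unfolding delta_def V_def supp_in_def by auto

lemma Phi_lin:
  assumes "S \<subseteq> E"
  shows "supp_in S x \<Longrightarrow> Phi x i = (\<Sum>j\<in>S. x j * Phi (delta j) i)"
proof -
  have "finite S" using assms fin finite_subset by blast
  thus "supp_in S x \<Longrightarrow> Phi x i = (\<Sum>j\<in>S. x j * Phi (delta j) i)" using assms
  proof (induction S arbitrary: x rule: finite_induct)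
    case empty
    hence "x = (\<lambda>_. 0)" by (auto simp: supp_in_def)
    thus ?case using Phi_zero by simp
  next
    case (insert s S)
    define x' where "x' = x(s := 0)"
    have sx': "supp_in S x'" using insert.prems unfolding x'_def supp_in_def by auto
    have IH: "Phi x' i = (\<Sum>j\<in>S. x' j * Phi (delta j) i)" using insert sx' by auto
    have IH': "Phi x' i = (\<Sum>j\<in>S. x j * Phi (delta j) i)"
      unfolding IH by (rule sum.cong) (use insert.hyps in \<open>auto simp: x'_def\<close>)
    have sE: "s \<in> E" using insert.prems by auto
    have x'V: "x' \<in> V" using sx' insert.prems unfolding V_def supp_in_def by auto
    show ?case
    proof (cases "x s = 0")
      case True
      hence "x = x'" unfolding x'_def by auto
      thus ?thesis using IH' True insert.hyps by simp
    next
      case False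
      hence xs: "x s = 1" by simp
      have "x = vadd x' (delta s)"
        using xs unfolding x'_def vadd_def delta_def by (auto simp: fun_eq_iff)
      hence "Phi x = vadd (Phi x') (Phi (delta s))" using Phi_add x'V delta_V[OF sE] by metis
      hence "Phi x i = Phi x' i + Phi (delta s) i" by (simp add: vadd_def)
      thus ?thesis using IH' xs insert.hyps by (simp add: add.commute)
    qed
  qed
qed

lemma Cp_mult:
  assumes x: "x \<in> V" and i: "i \<in> E"
  shows "(\<Sum>j\<in>E. Cp i j * x j) = Phi x i"
proof -
  have "Phi x i = (\<Sum>j\<in>E. x j * Phi (delta j) i)"
    using Phi_lin[of E x i] x unfolding V_def by simp
  also have "\<dots> = (\<Sum>j\<in>E. Cp i j * x j)"
    by (rule sum.cong) (use i in \<open>auto simp: Cp_def mult.commute\<close>)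
  finally show ?thesis by simp
qed

lemma core:
  assumes x: "x \<in> V" and i: "i \<in> E"
  shows "(\<Sum>j\<in>E. Cp i j * psi x j) = tau x i"
  using Cp_mult[OF psi_V[OF x] i] pinv_psi[OF x] unfolding Phi_def by simp

definition ip :: "('a \<Rightarrow> bit) \<Rightarrow> ('a \<Rightarrow> bit) \<Rightarrow> bit" where
  "ip x y = (\<Sum>k\<in>E. x k * y k)"

lemma ip_W: "ip x (W y) = ip y (W x)"
proof -
  have "ip x (W y) = (\<Sum>k\<in>E. \<Sum>j\<in>E. x k * C0 k j * y j)"
    unfolding ip_def W_def by (simp add: sum_distrib_left mult.assoc)
  also have "\<dots> = (\<Sum>j\<in>E. \<Sum>k\<in>E. x k * C0 k j * y j)" by (rule sum.swap)
  also have "\<dots> = (\<Sum>j\<in>E. \<Sum>k\<in>E. y j * C0 j k * x k)"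
    using sym unfolding symmetric_on_def
    by (intro sum.cong refl) (simp add: mult.commute mult.left_commute)
  also have "\<dots> = ip y (W x)"
    unfolding ip_def W_def by (simp add: sum_distrib_left mult.assoc)
  finally show ?thesis .
qed

lemma lagrange: "ip (psi y) (tau x) = ip (psi x) (tau y)"
proof -
  have "ip (psi y) (tau x) + ip (psi x) (tau y) = ip x (W y) + ip y (W x)"
    unfolding ip_def psi_def tau_def
    by (simp add: sum.distrib[symmetric]) (rule sum.cong, auto simp: mult.commute add.commute)
  also have "\<dots> = 0" using ip_W by simp
  finally show ?thesis by (simp add: bit_add_eq0)
qed

lemma ip_delta: "i \<in> E \<Longrightarrow> ip (delta i) y = y i"
proof -
  assume i: "i \<in> E"
  have "ip (delta i) y = (\<Sum>k\<in>E. if k = i then y k else 0)"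
    unfolding ip_def delta_def by (rule sum.cong) auto
  also have "\<dots> = y i" using i fin by (simp add: sum.delta)
  finally show ?thesis .
qed

lemma Cp_sym: "Cp i j = Cp j i"
proof (cases "i \<in> E \<and> j \<in> E")
  case True
  hence i: "i \<in> E" and j: "j \<in> E" by auto
  define x where "x = pinv (delta j)"
  define y where "y = pinv (delta i)"
  have xV: "x \<in> V" and yV: "y \<in> V" unfolding x_def y_def using pinv_V delta_V i j by auto
  have px: "psi x = delta j" and py: "psi y = delta i"
    unfolding x_def y_def using psi_pinv delta_V i j by auto
  have "Cp i j = ip (psi y) (tau x)"
    unfolding py using i j by (simp add: Cp_def ip_delta Phi_def x_def)
  also have "\<dots> = ip (psi x) (tau y)" by (rule lagrange)
  also have "\<dots> = Cp j i"
    unfolding px using i j by (simp add: Cp_def ip_delta Phi_def y_def)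
  finally show ?thesis .
next
  case False thus ?thesis unfolding Cp_def by auto
qed

lemma Cp_out: "i \<notin> E \<or> j \<notin> E \<Longrightarrow> Cp i j = 0" unfolding Cp_def by auto

lemma Cp_symmetric: "symmetric_on E Cp" unfolding symmetric_on_def using Cp_sym by auto

lemma ker_corr:
  assumes x: "x \<in> V" and Y: "Y \<subseteq> E"
  shows "ker_on C0 Y x \<longleftrightarrow> ker_on Cp (A \<triangle> Y) (psi x)"
proof -
  have AY: "A \<triangle> Y \<subseteq> E" using AE Y by (auto simp: symdiff_def)
  have xs: "supp_in E x" using x by (simp add: V_def)
  have ps: "supp_in E (psi x)" using psi_V[OF x] by (simp add: V_def)
  have "ker_on C0 Y x \<longleftrightarrow> (\<forall>i\<in>E-Y. x i = 0) \<and> (\<forall>i\<in>Y. W x i = 0)"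
    unfolding ker_on_iff[OF fin Y xs] W_def using Y by auto
  also have "\<dots> \<longleftrightarrow> (\<forall>i\<in>E-(A \<triangle> Y). psi x i = 0) \<and> (\<forall>i\<in>A \<triangle> Y. tau x i = 0)"
    unfolding psi_def tau_def symdiff_def using AE Y by auto
  also have "\<dots> \<longleftrightarrow> ker_on Cp (A \<triangle> Y) (psi x)"
  proof -
    have eq: "\<And>i. i \<in> A \<triangle> Y \<Longrightarrow> (\<Sum>j\<in>E. Cp i j * psi x j) = tau x i"
      using core[OF x] AY by blast
    show ?thesis unfolding ker_on_iff[OF fin AY ps] using eq by simp
  qed
  finally show ?thesis .
qed

lemma ker_on_V: "ker_on C T y \<Longrightarrow> T \<subseteq> E \<Longrightarrow> y \<in> V"
  unfolding ker_on_def V_def supp_in_def by auto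

lemma ns_corr:
  assumes Y: "Y \<subseteq> E"
  shows "ns Cp (A \<triangle> Y) \<longleftrightarrow> ns C0 Y"
proof
  assume n: "ns Cp (A \<triangle> Y)"
  show "ns C0 Y" unfolding ns_def
  proof (intro allI impI)
    fix x assume k: "ker_on C0 Y x"
    hence xV: "x \<in> V" using ker_on_V Y by blast
    hence "ker_on Cp (A \<triangle> Y) (psi x)" using ker_corr Y k by blast
    hence "psi x = (\<lambda>_. 0)" using n unfolding ns_def by blast
    thus "x = (\<lambda>_. 0)" using psi_kernel xV by blast
  qed
next
  assume n: "ns C0 Y"
  have AY: "A \<triangle> Y \<subseteq> E" using AE Y by (auto simp: symdiff_def)
  show "ns Cp (A \<triangle> Y)" unfolding ns_def
  proof (intro allI impI)
    fix x' assume k: "ker_on Cp (A \<triangle> Y) x'"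
    hence x'V: "x' \<in> V" using ker_on_V AY by blast
    define x where "x = pinv x'"
    have xV: "x \<in> V" and px: "psi x = x'" unfolding x_def using pinv_V psi_pinv x'V by auto
    have "ker_on C0 Y x" using ker_corr[OF xV Y] k px by simp
    hence "x = (\<lambda>_. 0)" using n unfolding ns_def by blast
    thus "x' = (\<lambda>_. 0)" using px by simp
  qed
qed

end




definition rk :: "'a set set \<Rightarrow> 'a set \<Rightarrow> nat" where
  "rk F S = Max (card ` {X \<in> F. X \<subseteq> S})"

lemma symdiff_twice[simp]: "A \<triangle> (A \<triangle> Z) = Z" by (auto simp: symdiff_def)

lemma dm_finite: "delta_matroid E F \<Longrightarrow> finite F"
  unfolding delta_matroid_def by (meson Pow_iff finite_Pow_iff rev_finite_subset subsetI)

lemma rk_ge: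
  assumes "finite F" "X \<in> F" "X \<subseteq> S" shows "card X \<le> rk F S"
  unfolding rk_def using assms by (intro Max_ge) auto

lemma rk_obtain:
  assumes "finite F" "{} \<in> F" obtains X where "X \<in> F" "X \<subseteq> S" "card X = rk F S"
proof -
  have "rk F S \<in> card ` {X \<in> F. X \<subseteq> S}" unfolding rk_def
    using assms by (intro Max_in) auto
  thus ?thesis using that by auto
qed

lemma reduce_lemma:
  assumes dm: "delta_matroid E F" and e: "{} \<in> F"
  shows "X \<in> F \<Longrightarrow> \<exists>Y\<in>F. Y \<subseteq> A \<and> card (X \<inter> A) \<le> card Y + card (X - A)"
proof (induction "card (X - A)" arbitrary: X rule: less_induct)
  case less
  have fE: "finite E" and XE: "X \<subseteq> E" using dm less.prems unfolding delta_matroid_def by auto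
  have fX: "finite X" using fE XE finite_subset by blast
  show ?case
  proof (cases "X - A = {}")
    case True
    hence "X \<subseteq> A" by auto
    hence "card (X \<inter> A) \<le> card X + card (X - A)" by (simp add: Int_absorb2)
    thus ?thesis using less.prems \<open>X \<subseteq> A\<close> by (intro bexI[of _ X]) auto
  next
    case False
    then obtain u where u: "u \<in> X" "u \<notin> A" by auto
    have "u \<in> X \<triangle> {}" using u by (simp add: symdiff_def)
    then obtain v where v: "v \<in> X \<triangle> {}" "X \<triangle> {u,v} \<in> F"
      using dm less.prems e unfolding delta_matroid_def by blast
    have vX: "v \<in> X" using v(1) by (simp add: symdiff_def)
    define X' where "X' = X - {u,v}"
    have "X \<triangle> {u,v} = X'" unfolding X'_def using u vX by (auto simp: symdiff_def)
    hence X'F: "X' \<in> F" using v(2) by simp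
    have lt: "card (X' - A) < card (X - A)"
      unfolding X'_def using u fX by (intro psubset_card_mono) auto
    obtain Y where Y: "Y \<in> F" "Y \<subseteq> A" "card (X' \<inter> A) \<le> card Y + card (X' - A)"
      using less.hyps[OF lt X'F] by blast
    have "card (X \<inter> A) + card (X' - A) \<le> card (X' \<inter> A) + card (X - A)"
    proof (cases "v \<in> A")
      case True
      have "X' \<inter> A = (X \<inter> A) - {v}" "X' - A = (X - A) - {u}"
        unfolding X'_def using u True by auto
      moreover have "card (X \<inter> A) > 0" "card (X - A) > 0"
        using True vX u fX by (auto simp: card_gt_0_iff)
      ultimately show ?thesis using True vX u fX by (simp add: card_Diff_singleton)
    next
      case False
      have "X' \<inter> A = X \<inter> A" unfolding X'_def using u False by auto
      moreover have "X' - A \<subseteq> X - A" unfolding X'_def by auto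
      ultimately show ?thesis using fX by (simp add: card_mono)
    qed
    thus ?thesis using Y by (intro bexI[of _ Y]) auto
  qed
qed

lemma card_symdiff: "finite A \<Longrightarrow> finite X \<Longrightarrow> card (A \<triangle> X) + card (A \<inter> X) = card A + card (X - A)"
proof -
  assume f: "finite A" "finite X"
  have "A \<triangle> X = (A - X) \<union> (X - A)" by (simp add: symdiff_def)
  moreover have "card ((A - X) \<union> (X - A)) = card (A - X) + card (X - A)"
    by (rule card_Un_disjoint) (use f in auto)
  ultimately have "card (A \<triangle> X) = card (A - X) + card (X - A)" by simp
  moreover have "card (A - X) + card (A \<inter> X) = card A"
  proof -
    have "A = (A - X) \<union> (A \<inter> X)" by auto
    moreover have "card ((A - X) \<union> (A \<inter> X)) = card (A - X) + card (A \<inter> X)"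
      by (rule card_Un_disjoint) (use f in auto)
    ultimately show ?thesis by metis
  qed
  ultimately show ?thesis by simp
qed

lemma min_bound:
  assumes dm: "delta_matroid E F" and e: "{} \<in> F" and AE: "A \<subseteq> E" and X: "X \<in> F"
  shows "card A \<le> card (A \<triangle> X) + rk F A"
proof -
  have fE: "finite E" and XE: "X \<subseteq> E" using dm X unfolding delta_matroid_def by auto
  have fA: "finite A" and fX: "finite X" using fE AE XE finite_subset by auto
  obtain Y where Y: "Y \<in> F" "Y \<subseteq> A" "card (X \<inter> A) \<le> card Y + card (X - A)"
    using reduce_lemma[OF dm e X] by blast
  have "card Y \<le> rk F A" using rk_ge[OF dm_finite[OF dm] Y(1,2)] .
  moreover have "card (A \<triangle> X) + card (A \<inter> X) = card A + card (X - A)" by (rule card_symdiff[OF fA fX])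
  ultimately show ?thesis using Y(3) by (simp add: Int_commute)
qed

lemma card_symdiff_compl:
  assumes "finite E" "A \<subseteq> E" "X \<subseteq> E"
  shows "card (A \<triangle> X) + card ((E - A) \<triangle> X) = card E"
proof -
  have "(E - A) \<triangle> X = E - (A \<triangle> X)" using assms by (auto simp: symdiff_def)
  moreover have "A \<triangle> X \<subseteq> E" using assms by (auto simp: symdiff_def)
  ultimately show ?thesis using assms by (metis card_Diff_subset finite_subset le_add_diff_inverse card_mono)
qed

lemma width_twist:
  assumes dm: "delta_matroid E F" and e: "{} \<in> F" and AE: "A \<subseteq> E"
  shows "width (twist F A) = rk F A + rk F (E - A)"
proof -
  have fE: "finite E" and FE: "\<forall>X\<in>F. X \<subseteq> E" using dm unfolding delta_matroid_def by auto
  have fF: "finite F" using dm_finite[OF dm] .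
  have fA: "finite A" using fE AE finite_subset by blast
  let ?S = "card ` twist F A"
  have S: "?S = (\<lambda>X. card (A \<triangle> X)) ` F" unfolding twist_def by (simp add: image_image)
  have fS: "finite ?S" "?S \<noteq> {}" using fF e unfolding S by auto
  obtain Y0 where Y0: "Y0 \<in> F" "Y0 \<subseteq> A" "card Y0 = rk F A" using rk_obtain[OF fF e] by blast
  obtain Y1 where Y1: "Y1 \<in> F" "Y1 \<subseteq> E - A" "card Y1 = rk F (E - A)" using rk_obtain[OF fF e] by blast
  have rkA: "rk F A \<le> card A" using Y0 fA card_mono by metis
  have minS: "Min ?S = card A - rk F A"
  proof (rule Min_eqI[OF fS(1)])
    fix s assume "s \<in> ?S"
    then obtain X where X: "X \<in> F" "s = card (A \<triangle> X)" unfolding S by auto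
    show "card A - rk F A \<le> s" using min_bound[OF dm e AE X(1)] X(2) by simp
  next
    have "card (A \<triangle> Y0) = card A - card Y0"
      using Y0 fA by (metis Diff_empty card_Diff_subset finite_subset symdiff_def Diff_eq_empty_iff Un_empty_right)
    thus "card A - rk F A \<in> ?S" unfolding S using Y0 by (metis image_eqI)
  qed
  have maxS: "Max ?S = card A + rk F (E - A)"
  proof (rule Max_eqI[OF fS(1)])
    fix s assume "s \<in> ?S"
    then obtain X where X: "X \<in> F" "s = card (A \<triangle> X)" unfolding S by auto
    have "card (E - A) \<le> card ((E - A) \<triangle> X) + rk F (E - A)"
      using min_bound[OF dm e _ X(1), of "E - A"] by auto
    moreover have "card (A \<triangle> X) + card ((E - A) \<triangle> X) = card E"
      using card_symdiff_compl[OF fE AE] FE X(1) by auto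
    moreover have "card E = card A + card (E - A)" using fE AE
      by (metis card_Diff_subset finite_subset le_add_diff_inverse card_mono)
    ultimately show "s \<le> card A + rk F (E - A)" using X(2) by linarith
  next
    have "A \<triangle> Y1 = A \<union> Y1" "A \<inter> Y1 = {}" using Y1(2) by (auto simp: symdiff_def)
    hence "card (A \<triangle> Y1) = card A + card Y1"
      using Y1 fA fE FE by (metis card_Un_disjoint finite_subset)
    thus "card A + rk F (E - A) \<in> ?S" unfolding S using Y1 by (metis image_eqI)
  qed
  show ?thesis unfolding width_def minS maxS using rkA by simp
qed

lemma single_term:
  fixes f :: "'b \<Rightarrow> nat"
  assumes "finite P"
  shows "(\<exists>(m::int) k. (\<Sum>A\<in>P. monom 1 (f A)) = monom m k) \<longleftrightarrow> (\<exists>k. \<forall>A\<in>P. f A = k)"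
proof
  assume "\<exists>(m::int) k. (\<Sum>A\<in>P. monom 1 (f A)) = monom m k"
  then obtain m :: int and k where e: "(\<Sum>A\<in>P. monom 1 (f A)) = monom m k" by blast
  have "\<forall>A\<in>P. f A = k"
  proof
    fix A assume A: "A \<in> P"
    show "f A = k"
    proof (rule ccontr)
      assume ne: "f A \<noteq> k"
      have "coeff (\<Sum>A\<in>P. monom (1::int) (f A)) (f A) = (\<Sum>B\<in>P. if f B = f A then 1 else 0)"
        by (simp add: coeff_sum)
      also have "\<dots> = int (card (P \<inter> {B. f B = f A}))"
        using assms by (simp add: sum.If_cases)
      also have "\<dots> > 0" using A assms by (subst of_nat_0_less_iff) (auto simp: card_gt_0_iff)
      finally have "coeff (monom m k) (f A) \<noteq> 0" using e by simp
      thus False using ne by simp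
    qed
  qed
  thus "\<exists>k. \<forall>A\<in>P. f A = k" by blast
next
  assume "\<exists>k. \<forall>A\<in>P. f A = k"
  then obtain k where k: "\<forall>A\<in>P. f A = k" by blast
  have "(\<Sum>A\<in>P. monom (1::int) (f A)) = (\<Sum>A\<in>P. monom 1 k)" using k by simp
  also have "\<dots> = monom (int (card P)) k"
    unfolding monom_sum[symmetric] by simp
  finally show "\<exists>(m::int) k. (\<Sum>A\<in>P. monom 1 (f A)) = monom m k" by blast
qed




context piv begin
lemma ns_corr': "Z \<subseteq> E \<Longrightarrow> ns Cp Z \<longleftrightarrow> ns C0 (A \<triangle> Z)"
proof -
  assume Z: "Z \<subseteq> E"
  have "A \<triangle> Z \<subseteq> E" using AE Z by (auto simp: symdiff_def)
  from ns_corr[OF this] show ?thesis by simp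
qed
end

lemma twist_mem: "Y \<in> twist F A \<longleftrightarrow> A \<triangle> Y \<in> F"
  unfolding twist_def image_iff by (metis symdiff_twice)

lemma dm_matrix_ns: "finite E \<Longrightarrow> dm_of_matrix E C = {Z. Z \<subseteq> E \<and> ns C Z}"
  unfolding dm_of_matrix_def using det_sub_ns finite_subset by blast

lemma not_ns_single: "\<not> ns C {a} \<Longrightarrow> C a a = 0"
  by (cases "C a a") (auto simp: ns_single)

lemma ns_empty: "ns C {}"
  unfolding ns_def ker_on_def by auto

lemma representation:
  assumes dm: "delta_matroid E F" and nF: "normal F" and bF: "binary E F"
  shows "\<exists>C. symmetric_on E C \<and> (\<forall>i j. i \<notin> E \<or> j \<notin> E \<longrightarrow> C i j = 0) \<and> F = {Z. Z \<subseteq> E \<and> ns C Z}"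
proof -
  have fin: "finite E" and FE: "\<forall>X\<in>F. X \<subseteq> E" using dm unfolding delta_matroid_def by auto
  obtain A0 C0 where A0: "A0 \<subseteq> E" and sym: "symmetric_on E C0" and tw: "twist F A0 = dm_of_matrix E C0"
    using bF unfolding binary_def by blast
  have tw': "twist F A0 = {Z. Z \<subseteq> E \<and> ns C0 Z}" using tw dm_matrix_ns[OF fin] by simp
  have "A0 \<in> twist F A0" unfolding twist_mem using nF by (simp add: normal_def symdiff_def)
  hence nsA: "ns C0 A0" using tw' by simp
  interpret piv E C0 A0 using fin sym A0 nsA by unfold_locales
  have "\<forall>Z. Z \<in> F \<longleftrightarrow> Z \<in> {Z. Z \<subseteq> E \<and> ns Cp Z}"
  proof (intro allI iffI)
    fix Z assume Z: "Z \<in> F"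
    hence ZE: "Z \<subseteq> E" using FE by auto
    have "A0 \<triangle> Z \<in> twist F A0" unfolding twist_mem using Z by simp
    hence "ns C0 (A0 \<triangle> Z)" using tw' by simp
    thus "Z \<in> {Z. Z \<subseteq> E \<and> ns Cp Z}" using ns_corr'[OF ZE] ZE by simp
  next
    fix Z assume "Z \<in> {Z. Z \<subseteq> E \<and> ns Cp Z}"
    hence ZE: "Z \<subseteq> E" and n: "ns Cp Z" by auto
    have "A0 \<triangle> Z \<subseteq> E" using ZE A0 by (auto simp: symdiff_def)
    hence "A0 \<triangle> Z \<in> twist F A0" using tw' n ns_corr'[OF ZE] by simp
    thus "Z \<in> F" unfolding twist_mem by simp
  qed
  hence "F = {Z. Z \<subseteq> E \<and> ns Cp Z}" by blast
  thus ?thesis using Cp_symmetric Cp_out by blast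
qed

lemma of_nat_bit: "(of_nat n :: bit) = (if even n then 0 else 1)"
  by (induction n) (auto simp: add_bit_eq_xor)

lemma ns_restrict:
  assumes fZ: "finite Z" and sub: "Z' \<subseteq> Z" and h: "\<forall>i\<in>Z-Z'. \<forall>j\<in>Z'. C i j = 0" and n: "ns C Z"
  shows "ns C Z'"
  unfolding ns_def
proof (intro allI impI)
  fix y assume k: "ker_on C Z' y"
  have s: "supp_in Z' y" using ker_on_supp[OF k] .
  have "ker_on C Z y" unfolding ker_on_def
  proof (intro conjI allI impI ballI)
    fix x assume "x \<notin> Z" thus "y x = 0" using s sub by (auto simp: supp_in_def)
  next
    fix x assume x: "x \<in> Z"
    have eq: "(\<Sum>j\<in>Z'. C x j * y j) = (\<Sum>j\<in>Z. C x j * y j)" by (rule sum_supp[OF fZ sub s])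
    show "(\<Sum>j\<in>Z. C x j * y j) = 0"
    proof (cases "x \<in> Z'")
      case True thus ?thesis using k eq unfolding ker_on_def by simp
    next
      case False
      hence "(\<Sum>j\<in>Z'. C x j * y j) = 0" using h x by (intro sum.neutral) auto
      thus ?thesis using eq by simp
    qed
  qed
  thus "y = (\<lambda>_. 0)" using n unfolding ns_def by blast
qed

lemma ker_part:
  assumes fZ: "finite Z" and Z: "Z = Z1 \<union> Z2" "Z1 \<inter> Z2 = {}" and h: "\<forall>i\<in>Z1. \<forall>j\<in>Z2. C i j = 0"
    and k: "ker_on C Z y"
  shows "ker_on C Z1 (\<lambda>i. if i \<in> Z1 then y i else 0)"
  unfolding ker_on_def
proof (intro conjI allI impI ballI)
  fix x assume "x \<notin> Z1" thus "(if x \<in> Z1 then y x else 0) = 0" by simp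
next
  fix x assume x: "x \<in> Z1"
  have f1: "finite Z1" "finite Z2" using fZ Z by auto
  have "(\<Sum>j\<in>Z. C x j * y j) = (\<Sum>j\<in>Z1. C x j * y j) + (\<Sum>j\<in>Z2. C x j * y j)"
    unfolding Z(1) by (rule sum.union_disjoint[OF f1 Z(2)])
  moreover have "(\<Sum>j\<in>Z2. C x j * y j) = 0" using h x by (intro sum.neutral) auto
  moreover have "(\<Sum>j\<in>Z. C x j * y j) = 0" using k x Z(1) unfolding ker_on_def by auto
  ultimately have "(\<Sum>j\<in>Z1. C x j * y j) = 0" by simp
  thus "(\<Sum>j\<in>Z1. C x j * (if j \<in> Z1 then y j else 0)) = 0" by simp
qed

lemma ns_join:
  assumes fZ: "finite Z" and Z: "Z = Z1 \<union> Z2" "Z1 \<inter> Z2 = {}"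
    and h1: "\<forall>i\<in>Z1. \<forall>j\<in>Z2. C i j = 0" and h2: "\<forall>i\<in>Z2. \<forall>j\<in>Z1. C i j = 0"
    and n1: "ns C Z1" and n2: "ns C Z2"
  shows "ns C Z"
  unfolding ns_def
proof (intro allI impI)
  fix y assume k: "ker_on C Z y"
  have a: "(\<lambda>i. if i \<in> Z1 then y i else 0) = (\<lambda>_. 0)"
    using ker_part[OF fZ Z h1 k] n1 unfolding ns_def by blast
  have Z': "Z = Z2 \<union> Z1" "Z2 \<inter> Z1 = {}" using Z by auto
  have b: "(\<lambda>i. if i \<in> Z2 then y i else 0) = (\<lambda>_. 0)"
    using ker_part[OF fZ Z' h2 k] n2 unfolding ns_def by blast
  show "y = (\<lambda>_. 0)"
  proof
    fix i show "y i = 0"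
    proof (cases "i \<in> Z")
      case True
      thus ?thesis using a b Z(1) by (metis UnE)
    next
      case False thus ?thesis using k unfolding ker_on_def by auto
    qed
  qed
qed

locale rep =
  fixes E :: "'a set" and F :: "'a set set" and C :: "'a \<Rightarrow> 'a \<Rightarrow> bit"
  assumes dm: "delta_matroid E F" and sym: "symmetric_on E C"
    and out: "\<forall>i j. i \<notin> E \<or> j \<notin> E \<longrightarrow> C i j = 0"
    and FC: "F = {Z. Z \<subseteq> E \<and> ns C Z}" and ev: "even_dm F"
begin

lemma fin: "finite E" using dm unfolding delta_matroid_def by auto
lemma emp: "{} \<in> F" using FC ns_empty by auto
lemma fF: "finite F" using dm_finite[OF dm] .

lemma even_card: "X \<in> F \<Longrightarrow> even (card X)"
  using ev emp unfolding even_dm_def by (metis Diff_empty Un_empty_right empty_Diff symdiff_def)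

lemma inF: "Z \<in> F \<longleftrightarrow> Z \<subseteq> E \<and> ns C Z" using FC by auto

lemma diag0: "v \<in> E \<Longrightarrow> C v v = 0"
proof -
  assume v: "v \<in> E"
  have "{v} \<notin> F" using even_card by fastforce
  hence "\<not> ns C {v}" using v inF by auto
  thus ?thesis by (rule not_ns_single)
qed

lemma symC: "u \<in> E \<Longrightarrow> v \<in> E \<Longrightarrow> C u v = C v u"
  using sym unfolding symmetric_on_def by auto

lemma pairF: "u \<in> E \<Longrightarrow> v \<in> E \<Longrightarrow> u \<noteq> v \<Longrightarrow> {u,v} \<in> F \<longleftrightarrow> C u v \<noteq> 0"
  using inF ns_pair0[of u v C] diag0 symC by auto

lemma rk_le_card: "S \<subseteq> E \<Longrightarrow> rk F S \<le> card S"
  by (metis rk_obtain[OF fF emp] card_mono fin finite_subset)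

lemma rk_mono: "S \<subseteq> S' \<Longrightarrow> rk F S \<le> rk F S'"
  by (metis rk_obtain[OF fF emp] rk_ge[OF fF] order_trans)

lemma rk_empty: "rk F {} = 0"
  using rk_le_card[of "{}"] by simp

lemma rk_single: "v \<in> E \<Longrightarrow> rk F {v} = 0"
proof -
  assume v: "v \<in> E"
  obtain X where X: "X \<in> F" "X \<subseteq> {v}" "card X = rk F {v}" using rk_obtain[OF fF emp] by blast
  have "X \<noteq> {v}" using even_card X(1) by fastforce
  hence "X = {}" using X(2) by blast
  thus ?thesis using X(3) by simp
qed

lemma rk_pair_edge: "u \<in> E \<Longrightarrow> v \<in> E \<Longrightarrow> u \<noteq> v \<Longrightarrow> C u v = 1 \<Longrightarrow> rk F {u,v} = 2"
proof -
  assume a: "u \<in> E" "v \<in> E" "u \<noteq> v" "C u v = 1"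
  have "{u,v} \<in> F" using pairF a by simp
  hence "2 \<le> rk F {u,v}" using rk_ge[OF fF, of "{u,v}" "{u,v}"] a(3) by simp
  moreover have "rk F {u,v} \<le> 2" using rk_le_card[of "{u,v}"] a by simp
  ultimately show ?thesis by simp
qed

lemma rk_pair_nonedge: "u \<in> E \<Longrightarrow> v \<in> E \<Longrightarrow> u \<noteq> v \<Longrightarrow> C u v = 0 \<Longrightarrow> rk F {u,v} = 0"
proof -
  assume a: "u \<in> E" "v \<in> E" "u \<noteq> v" "C u v = 0"
  obtain X where X: "X \<in> F" "X \<subseteq> {u,v}" "card X = rk F {u,v}" using rk_obtain[OF fF emp] by blast
  have "{u,v} \<notin> F" using pairF a by simp
  moreover have "{u} \<notin> F" "{v} \<notin> F" using even_card by fastforce+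
  moreover have "X = {} \<or> X = {u} \<or> X = {v} \<or> X = {u,v}" using X(2) by blast
  ultimately have "X = {}" using X(1) by blast
  thus ?thesis using X(3) by simp
qed

lemma big_not_F:
  assumes X: "X \<in> F" "X \<subseteq> T" "card X = rk F T" and T: "T \<subseteq> E"
    and Z: "Z \<subseteq> T" "X \<subset> Z"
  shows "Z \<notin> F"
proof
  assume "Z \<in> F"
  hence "card Z \<le> rk F T" using rk_ge[OF fF _ Z(1)] by simp
  moreover have "card X < card Z" using Z T fin by (meson finite_subset psubset_card_mono)
  ultimately show False using X(3) by simp
qed

lemma K1:
  assumes T: "T \<subseteq> E" and vT: "v \<in> T" and r: "rk F (T - {v}) = rk F T"
  shows "\<exists>y. ker_on C T y \<and> y v = 1"
proof -
  obtain X where X: "X \<in> F" "X \<subseteq> T - {v}" "card X = rk F (T - {v})"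
    using rk_obtain[OF fF emp] by blast
  have XE: "X \<subseteq> E" and nsX: "ns C X" using X(1) inF by auto
  have XT: "X \<subseteq> T" and vX: "v \<notin> X" using X(2) by auto
  interpret q: piv E C X using fin sym XE nsX by unfold_locales
  have big: "Z \<notin> F" if "Z \<subseteq> T" "X \<subset> Z" for Z
    using big_not_F[OF X(1) XT _ T that] X(3) r by simp
  have d0: "q.Cp a a = 0" if a: "a \<in> T - X" for a
  proof -
    have "X \<triangle> {a} = insert a X" using a by (auto simp: symdiff_def)
    hence "\<not> ns C (X \<triangle> {a})" using big[of "insert a X"] a XT T inF by auto
    hence "\<not> ns q.Cp {a}" using q.ns_corr'[of "{a}"] a T by auto
    thus ?thesis by (rule not_ns_single)
  qed
  have z0: "q.Cp a b = 0" if a: "a \<in> T - X" and b: "b \<in> T - X" for a b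
  proof (cases "a = b")
    case True thus ?thesis using d0 a by simp
  next
    case False
    have "X \<triangle> {a,b} = X \<union> {a,b}" using a b by (auto simp: symdiff_def)
    hence "\<not> ns C (X \<triangle> {a,b})" using big[of "X \<union> {a,b}"] a b XT T inF by auto
    hence "\<not> ns q.Cp {a,b}" using q.ns_corr'[of "{a,b}"] a b T by auto
    thus ?thesis using ns_pair0[of a b q.Cp] False d0 a b q.Cp_sym by auto
  qed
  have XT': "X \<triangle> T = T - X" using XT by (auto simp: symdiff_def)
  have kd: "ker_on q.Cp (X \<triangle> T) (q.delta v)"
    unfolding XT' ker_on_def
  proof (intro conjI allI impI ballI)
    fix i assume "i \<notin> T - X" thus "q.delta v i = 0" using vT vX by (auto simp: q.delta_def)
  next
    fix i assume i: "i \<in> T - X"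
    show "(\<Sum>j\<in>T - X. q.Cp i j * q.delta v j) = 0" using z0 i by (intro sum.neutral) auto
  qed
  have dV: "q.delta v \<in> q.V" using q.delta_V vT T by auto
  define x where "x = q.pinv (q.delta v)"
  have xV: "x \<in> q.V" and px: "q.psi x = q.delta v" unfolding x_def using q.pinv_V q.psi_pinv dV by auto
  have "ker_on C T x" using q.ker_corr[OF xV T] kd px by simp
  moreover have "x v = 1" using q.psi_out[OF vX, of x] px by (simp add: q.delta_def)
  ultimately show ?thesis by blast
qed

lemma K2:
  assumes T: "T \<subseteq> E" and vT: "v \<in> T" and k: "ker_on C T y" and yv: "y v = 1"
  shows "rk F T \<le> rk F (T - {v})"
proof -
  obtain X where X: "X \<in> F" "X \<subseteq> T" "card X = rk F T" using rk_obtain[OF fF emp] by blast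
  have XE: "X \<subseteq> E" and nsX: "ns C X" using X(1) inF by auto
  have fX: "finite X" using XE fin finite_subset by blast
  show ?thesis
  proof (cases "v \<in> X")
    case False
    hence "X \<subseteq> T - {v}" using X(2) by auto
    thus ?thesis using rk_ge[OF fF X(1)] X(3) by simp
  next
    case vX: True
    interpret q: piv E C X using fin sym XE nsX by unfold_locales
    have big: "Z \<notin> F" if "Z \<subseteq> T" "X \<subset> Z" for Z
      using big_not_F[OF X T that] .
    have "X - {v} \<notin> F"
    proof
      assume "X - {v} \<in> F"
      hence "even (card (X - {v}))" by (rule even_card)
      moreover have "even (card X)" using even_card X(1) by simp
      moreover have "card X > 0" using vX fX by (auto simp: card_gt_0_iff)
      ultimately show False using vX fX by (simp add: card_Diff_singleton)
    qed
    moreover have "X \<triangle> {v} = X - {v}" using vX by (auto simp: symdiff_def)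
    ultimately have "\<not> ns C (X \<triangle> {v})" using inF XE by auto
    hence "\<not> ns q.Cp {v}" using q.ns_corr'[of "{v}"] vT T by auto
    hence cvv: "q.Cp v v = 0" by (rule not_ns_single)
    have yV: "y \<in> q.V" using q.ker_on_V[OF k T] .
    have XT': "X \<triangle> T = T - X" using X(2) by (auto simp: symdiff_def)
    have k': "ker_on q.Cp (T - X) (q.psi y)" using q.ker_corr[OF yV T] k XT' by simp
    have "(\<Sum>j\<in>E. q.Cp v j * q.psi y j) = q.tau y v" using q.core[OF yV] vT T by auto
    also have "\<dots> = 1" using vX yv by (simp add: q.tau_def)
    finally have s1: "(\<Sum>j\<in>E. q.Cp v j * q.psi y j) = 1" .
    obtain w where w: "w \<in> T - X" "q.Cp v w \<noteq> 0"
    proof (rule ccontr)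
      assume "\<not> thesis"
      hence allz: "\<forall>w\<in>T - X. q.Cp v w = 0" using that by blast
      have "(\<Sum>j\<in>T - X. q.Cp v j * q.psi y j) = (\<Sum>j\<in>E. q.Cp v j * q.psi y j)"
        by (rule sum_supp[OF fin _ ker_on_supp[OF k']]) (use T in auto)
      moreover have "(\<Sum>j\<in>T - X. q.Cp v j * q.psi y j) = 0" using allz by (intro sum.neutral) auto
      ultimately show False using s1 by simp
    qed
    have wv: "w \<noteq> v" using w vX by auto
    have "X \<triangle> {w} = insert w X" using w by (auto simp: symdiff_def)
    hence "\<not> ns C (X \<triangle> {w})" using big[of "insert w X"] w X(2) T inF by auto
    hence "\<not> ns q.Cp {w}" using q.ns_corr'[of "{w}"] w T by auto
    hence cww: "q.Cp w w = 0" by (rule not_ns_single)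
    have "ns q.Cp {v,w}" using ns_pair0[of v w q.Cp] wv cvv cww q.Cp_sym w(2) by auto
    hence "ns C (X \<triangle> {v,w})" using q.ns_corr'[of "{v,w}"] w vT T by auto
    moreover have XY: "X \<triangle> {v,w} = insert w (X - {v})" using vX w by (auto simp: symdiff_def)
    moreover have "insert w (X - {v}) \<subseteq> T - {v}" using w X(2) wv by auto
    ultimately have "insert w (X - {v}) \<in> F" "insert w (X - {v}) \<subseteq> T - {v}" using inF T by auto
    hence "card (insert w (X - {v})) \<le> rk F (T - {v})" using rk_ge[OF fF] by blast
    moreover have "card (insert w (X - {v})) = card X"
      using w vX fX by (simp add: card_Diff_singleton)
      (metis One_nat_def Suc_pred card_gt_0_iff empty_iff)
    ultimately show ?thesis using X(3) by simp
  qed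
qed

end




context rep begin

lemma split_disconnected:
  assumes E: "E = E1 \<union> E2" "E1 \<inter> E2 = {}" "E1 \<noteq> {}" "E2 \<noteq> {}"
    and h: "\<forall>i\<in>E1. \<forall>j\<in>E2. C i j = 0"
  shows "disconnected E F"
proof -
  have h2: "\<forall>i\<in>E2. \<forall>j\<in>E1. C i j = 0"
  proof (intro ballI)
    fix i j assume i: "i \<in> E2" and j: "j \<in> E1"
    hence "C i j = C j i" using symC E(1) by auto
    thus "C i j = 0" using h i j by simp
  qed
  define F1 where "F1 = {X\<in>F. X \<subseteq> E1}"
  define F2 where "F2 = {X\<in>F. X \<subseteq> E2}"
  have dmE: "\<forall>X\<in>F. \<forall>Y\<in>F. \<forall>u\<in>X \<triangle> Y. \<exists>v\<in>X \<triangle> Y. X \<triangle> {u, v} \<in> F"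
    using dm unfolding delta_matroid_def by blast
  have dmi: "delta_matroid Ei {X\<in>F. X \<subseteq> Ei}" if Ei: "Ei \<subseteq> E" for Ei
    unfolding delta_matroid_def
  proof (intro conjI ballI)
    show "finite Ei" using Ei fin finite_subset by blast
    show "{X \<in> F. X \<subseteq> Ei} \<noteq> {}" using emp by auto
  next
    fix X assume "X \<in> {X \<in> F. X \<subseteq> Ei}" thus "X \<subseteq> Ei" by simp
  next
    fix X Y u assume X: "X \<in> {X \<in> F. X \<subseteq> Ei}" and Y: "Y \<in> {X \<in> F. X \<subseteq> Ei}" and u: "u \<in> X \<triangle> Y"
    then obtain v where v: "v \<in> X \<triangle> Y" "X \<triangle> {u, v} \<in> F" using dmE by blast
    have "X \<triangle> {u,v} \<subseteq> Ei" using X Y u v(1) by (auto simp: symdiff_def)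
    thus "\<exists>v\<in>X \<triangle> Y. X \<triangle> {u, v} \<in> {X \<in> F. X \<subseteq> Ei}" using v by blast
  qed
  have "F = direct_sum F1 F2"
  proof (rule equalityI; rule subsetI)
    fix Z assume Z: "Z \<in> F"
    hence ZE: "Z \<subseteq> E" and nZ: "ns C Z" using inF by auto
    have fZ: "finite Z" using ZE fin finite_subset by blast
    have "ns C (Z \<inter> E1)" using ns_restrict[OF fZ _ _ nZ, of "Z \<inter> E1"] h2 ZE E(1) by blast
    moreover have "ns C (Z \<inter> E2)" using ns_restrict[OF fZ _ _ nZ, of "Z \<inter> E2"] h ZE E(1,2) by blast
    ultimately have "Z \<inter> E1 \<in> F1" "Z \<inter> E2 \<in> F2" using ZE inF unfolding F1_def F2_def by auto
    moreover have "Z = (Z \<inter> E1) \<union> (Z \<inter> E2)" using ZE E(1) by auto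
    ultimately show "Z \<in> direct_sum F1 F2" unfolding direct_sum_def by blast
  next
    fix Z assume "Z \<in> direct_sum F1 F2"
    then obtain X Y where XY: "Z = X \<union> Y" "X \<in> F1" "Y \<in> F2" unfolding direct_sum_def by blast
    have X: "X \<subseteq> E1" "ns C X" and Y: "Y \<subseteq> E2" "ns C Y" using XY inF unfolding F1_def F2_def by auto
    have ZE: "Z \<subseteq> E" using XY(1) X Y E(1) by auto
    have fZ: "finite Z" using ZE fin finite_subset by blast
    have "X \<inter> Y = {}" using X Y E(2) by auto
    hence "ns C Z" using ns_join[OF fZ XY(1) _ _ _ X(2) Y(2)] X(1) Y(1) h h2 by blast
    thus "Z \<in> F" using ZE inF by simp
  qed
  moreover have "delta_matroid E1 F1" "delta_matroid E2 F2"
    unfolding F1_def F2_def using dmi E(1) by auto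
  ultimately show ?thesis unfolding disconnected_def using E by blast
qed

lemma forward:
  assumes con: "connected_dm E F" and ne: "E \<noteq> {}"
    and hyp: "\<forall>A. A \<subseteq> E \<longrightarrow> rk F A + rk F (E - A) = rk F E"
  shows "(\<forall>u\<in>E. \<forall>v\<in>E. u \<noteq> v \<longrightarrow> C u v = 1) \<and> odd (card E)"
proof -
  have r1: "rk F (E - {u}) = rk F E" if "u \<in> E" for u
    using hyp[rule_format, of "{u}"] rk_single[OF that] that by simp
  have helper: False if y: "ker_on C E y" and uv: "u \<in> E" "v \<in> E" "u \<noteq> v" "C u v = 1"
    and yu: "y u = 0" and yv: "y v = 1" for y u v
  proof -
    have s: "supp_in (E - {u}) y" using ker_on_supp[OF y] yu by (auto simp: supp_in_def)
    have "ker_on C (E - {u}) y" unfolding ker_on_def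
    proof (intro conjI allI impI ballI)
      fix x assume "x \<notin> E - {u}" thus "y x = 0" using s by (simp add: supp_in_def)
    next
      fix x assume x: "x \<in> E - {u}"
      have "(\<Sum>j\<in>E - {u}. C x j * y j) = (\<Sum>j\<in>E. C x j * y j)"
        by (rule sum_supp[OF fin _ s]) auto
      thus "(\<Sum>j\<in>E - {u}. C x j * y j) = 0" using y x unfolding ker_on_def by auto
    qed
    hence "rk F (E - {u}) \<le> rk F (E - {u} - {v})"
      using K2[of "E - {u}" v y] uv yv by auto
    moreover have "rk F {u,v} + rk F (E - {u,v}) = rk F E" using hyp uv by auto
    moreover have "rk F {u,v} = 2" using rk_pair_edge uv by blast
    moreover have "E - {u} - {v} = E - {u,v}" by auto
    ultimately show False using r1[OF uv(1)] by simp
  qed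
  have const: "y u = y v" if y: "ker_on C E y" and uv: "u \<in> E" "v \<in> E" for y u v
  proof (rule ccontr)
    assume ne: "y u \<noteq> y v"
    define E1 where "E1 = {i\<in>E. y i = 1}"
    define E2 where "E2 = {i\<in>E. y i = 0}"
    have E: "E = E1 \<union> E2" "E1 \<inter> E2 = {}" unfolding E1_def E2_def by (auto simp: bit_not_one_iff)
    have "E1 \<noteq> {} \<and> E2 \<noteq> {}"
    proof (cases "y u = 1")
      case True
      hence "y v = 0" using ne by simp
      thus ?thesis using True uv unfolding E1_def E2_def by blast
    next
      case False
      hence "y u = 0" by simp
      hence "y v = 1" using ne by simp
      thus ?thesis using \<open>y u = 0\<close> uv unfolding E1_def E2_def by blast
    qed
    moreover have "\<forall>i\<in>E1. \<forall>j\<in>E2. C i j = 0"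
    proof (intro ballI)
      fix i j assume i: "i \<in> E1" and j: "j \<in> E2"
      show "C i j = 0"
      proof (rule ccontr)
        assume "C i j \<noteq> 0"
        hence "C j i = 1" using symC i j unfolding E1_def E2_def by auto
        moreover have "i \<noteq> j" using i j unfolding E1_def E2_def by auto
        ultimately show False using helper[OF y, of j i] i j unfolding E1_def E2_def by blast
      qed
    qed
    ultimately have "disconnected E F" using split_disconnected[OF E] by blast
    thus False using con unfolding connected_dm_def by simp
  qed
  obtain u0 where u0: "u0 \<in> E" using ne by blast
  obtain y0 where y0: "ker_on C E y0" "y0 u0 = 1" using K1[of E u0] r1[OF u0] u0 by auto
  have one: "\<forall>i\<in>E. y0 i = 1" using const[OF y0(1)] y0(2) u0 by metis
  have rowsum: "(\<Sum>j\<in>E. C x j) = 0" if x: "x \<in> E" for x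
  proof -
    have "(\<Sum>j\<in>E. C x j * y0 j) = 0" using y0(1) x unfolding ker_on_def by auto
    moreover have "(\<Sum>j\<in>E. C x j * y0 j) = (\<Sum>j\<in>E. C x j)" using one by (intro sum.cong) auto
    ultimately show ?thesis by simp
  qed
  have adj: "C u v = 1" if uv: "u \<in> E" "v \<in> E" "u \<noteq> v" for u v
  proof (rule ccontr)
    assume "C u v \<noteq> 1"
    hence c0: "C u v = 0" by simp
    have "rk F {u,v} + rk F (E - {u,v}) = rk F E" using hyp uv by auto
    hence "rk F (E - {u,v}) = rk F E" using rk_pair_nonedge[OF uv c0] by simp
    moreover have "E - {u} - {v} = E - {u,v}" by auto
    ultimately have "rk F (E - {u} - {v}) = rk F (E - {u})" using r1[OF uv(1)] by simp
    then obtain y where y: "ker_on C (E - {u}) y" "y v = 1" using K1[of "E - {u}" v] uv by auto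
    have s: "supp_in (E - {u}) y" using ker_on_supp[OF y(1)] .
    have eqs: "(\<Sum>j\<in>E - {u}. C x j * y j) = (\<Sum>j\<in>E. C x j * y j)" for x
      by (rule sum_supp[OF fin _ s]) auto
    have others: "(\<Sum>j\<in>E. C x j * y j) = 0" if "x \<in> E - {u}" for x
      using y(1) that eqs unfolding ker_on_def by metis
    have "(\<Sum>x\<in>E. \<Sum>j\<in>E. C x j * y j) = (\<Sum>j\<in>E. \<Sum>x\<in>E. C x j * y j)" by (rule sum.swap)
    also have "\<dots> = (\<Sum>j\<in>E. (\<Sum>x\<in>E. C j x) * y j)"
      by (intro sum.cong refl) (simp add: sum_distrib_right symC)
    also have "\<dots> = 0" using rowsum by simp
    finally have tot: "(\<Sum>x\<in>E. \<Sum>j\<in>E. C x j * y j) = 0" .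
    have "(\<Sum>x\<in>E. \<Sum>j\<in>E. C x j * y j) = (\<Sum>j\<in>E. C u j * y j) + (\<Sum>x\<in>E - {u}. \<Sum>j\<in>E. C x j * y j)"
      by (rule sum.remove[OF fin uv(1)])
    also have "(\<Sum>x\<in>E - {u}. \<Sum>j\<in>E. C x j * y j) = 0" using others by (intro sum.neutral) auto
    finally have ru: "(\<Sum>j\<in>E. C u j * y j) = 0" using tot by simp
    have "ker_on C E y" unfolding ker_on_def
    proof (intro conjI allI impI ballI)
      fix x assume "x \<notin> E" thus "y x = 0" using s by (simp add: supp_in_def)
    next
      fix x assume x: "x \<in> E"
      show "(\<Sum>j\<in>E. C x j * y j) = 0" using ru others x by (cases "x = u") auto
    qed
    hence "y u = y v" using const uv by blast
    moreover have "y u = 0" using s by (simp add: supp_in_def)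
    ultimately show False using y(2) by simp
  qed
  have "(\<Sum>j\<in>E. C u0 j) = (\<Sum>j\<in>E - {u0}. C u0 j)"
    using u0 fin diag0[OF u0] by (simp add: sum.remove)
  also have "\<dots> = (\<Sum>j\<in>E - {u0}. 1)" using adj u0 by (intro sum.cong) auto
  also have "\<dots> = of_nat (card E - 1)" using u0 fin by simp
  finally have "(of_nat (card E - 1) :: bit) = 0" using rowsum[OF u0] by simp
  hence "even (card E - 1)" by (simp add: of_nat_bit split: if_splits)
  moreover have "card E > 0" using u0 fin by (auto simp: card_gt_0_iff)
  ultimately have "odd (card E)" by (metis One_nat_def Suc_pred even_Suc)
  thus ?thesis using adj by blast
qed

lemma backward:
  assumes adj: "\<forall>u\<in>E. \<forall>v\<in>E. u \<noteq> v \<longrightarrow> C u v = 1" and odd: "odd (card E)"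
  shows "\<forall>A. A \<subseteq> E \<longrightarrow> rk F A + rk F (E - A) = card E - 1"
proof -
  have even_ns: "ns C X" if X: "X \<subseteq> E" "even (card X)" for X
    unfolding ns_def
  proof (intro allI impI)
    fix y assume k: "ker_on C X y"
    have fX: "finite X" using X fin finite_subset by blast
    define s where "s = (\<Sum>j\<in>X. y j)"
    have ys: "y x = s" if x: "x \<in> X" for x
    proof -
      have "(\<Sum>j\<in>X. C x j * y j) = C x x * y x + (\<Sum>j\<in>X - {x}. C x j * y j)"
        by (rule sum.remove[OF fX x])
      also have "\<dots> = (\<Sum>j\<in>X - {x}. y j)"
      proof -
        have "C x x = 0" using diag0 x X by auto
        moreover have "\<forall>j\<in>X - {x}. C x j = 1"
        proof
          fix j assume j: "j \<in> X - {x}"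
          hence "j \<in> E" "x \<in> E" "x \<noteq> j" using x X by auto
          thus "C x j = 1" using adj[rule_format, of x j] by simp
        qed
        hence "(\<Sum>j\<in>X - {x}. C x j * y j) = (\<Sum>j\<in>X - {x}. y j)"
          by (intro sum.cong) auto
        ultimately show ?thesis by simp
      qed
      finally have "(\<Sum>j\<in>X - {x}. y j) = 0" using k x unfolding ker_on_def by auto
      moreover have "s = y x + (\<Sum>j\<in>X - {x}. y j)" unfolding s_def by (rule sum.remove[OF fX x])
      ultimately show ?thesis by simp
    qed
    have "(\<Sum>j\<in>X. y j) = (\<Sum>j\<in>X. s)" using ys by (intro sum.cong) auto
    with s_def have "s = (\<Sum>j\<in>X. s)" by (rule trans)
    also have "\<dots> = of_nat (card X) * s" by simp
    also have "\<dots> = 0" using X(2) by (simp add: of_nat_bit)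
    finally have "s = 0" .
    show "y = (\<lambda>_. 0)"
    proof
      fix i show "y i = 0" using ys \<open>s = 0\<close> k unfolding ker_on_def by (cases "i \<in> X") auto
    qed
  qed
  have rkf: "rk F S = (if even (card S) then card S else card S - 1)" if S: "S \<subseteq> E" for S
  proof -
    have fS: "finite S" using S fin finite_subset by blast
    obtain X where X: "X \<in> F" "X \<subseteq> S" "card X = rk F S" using rk_obtain[OF fF emp] by blast
    have le: "card X \<le> card S" using X fS card_mono by blast
    have evX: "even (card X)" using even_card X(1) by simp
    show ?thesis
    proof (cases "even (card S)")
      case True
      have "S \<in> F" using inF S even_ns True by simp
      hence "card S \<le> rk F S" using rk_ge[OF fF _ order_refl] by simp
      thus ?thesis using True le X(3) by simp
    next
      case False
      obtain Y where Y: "Y \<subseteq> S" "card Y = card S - 1"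
        using obtain_subset_with_card_n[of "card S - 1" S] by auto
      have "even (card Y)" using False Y(2) by (cases "card S") auto
      hence "Y \<in> F" using inF even_ns Y S by auto
      hence "card S - 1 \<le> rk F S" using rk_ge[OF fF _ Y(1)] Y(2) by simp
      moreover have "card X \<noteq> card S" using evX False by auto
      ultimately show ?thesis using False le X(3) by simp
    qed
  qed
  show ?thesis
  proof (intro allI impI)
    fix A assume A: "A \<subseteq> E"
    have fA: "finite A" using A fin finite_subset by blast
    have "card (E - A) = card E - card A" by (rule card_Diff_subset[OF fA A])
    moreover have "card A \<le> card E" by (rule card_mono[OF fin A])
    ultimately have "card A + card (E - A) = card E" by simp
    note cs = this
    have EA: "E - A \<subseteq> E" by auto
    show "rk F A + rk F (E - A) = card E - 1"
    proof (cases "even (card A)")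
      case True
      hence "odd (card (E - A))" using cs odd by (metis even_add)
      thus ?thesis using True rkf[OF A] rkf[OF EA] cs by (cases "card (E - A)") auto
    next
      case False
      hence "even (card (E - A))" using cs odd by (metis even_add)
      thus ?thesis using False rkf[OF A] rkf[OF EA] cs by (cases "card A") auto
    qed
  qed
qed

end




theorem mainTheorem9:
  fixes E :: "'a set" and F :: "'a set set"
  assumes "delta_matroid E F" and "connected_dm E F" and "even_dm F"
    and "normal F" and "binary E F" and "E \<noteq> {}"
  shows "(\<exists>(m::int) (k::nat). twist_poly E F = monom m k) \<longleftrightarrow> ig_complete_odd E F"
proof -
  note dm = assms(1) and con = assms(2) and ev = assms(3) and nF = assms(4) and bF = assms(5) and ne = assms(6)
  obtain C where C: "symmetric_on E C" "\<forall>i j. i \<notin> E \<or> j \<notin> E \<longrightarrow> C i j = 0"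
    "F = {Z. Z \<subseteq> E \<and> ns C Z}" using representation[OF dm nF bF] by blast
  interpret rep E F C using dm C ev by unfold_locales
  have RC: "repr_matrix E F = C"
    unfolding repr_matrix_def
  proof (rule the_equality)
    show "symmetric_on E C \<and> (\<forall>i j. i \<notin> E \<or> j \<notin> E \<longrightarrow> C i j = 0) \<and> F = dm_of_matrix E C"
      using C dm_matrix_ns[OF fin] by simp
  next
    fix C2 assume h: "symmetric_on E C2 \<and> (\<forall>i j. i \<notin> E \<or> j \<notin> E \<longrightarrow> C2 i j = 0) \<and> F = dm_of_matrix E C2"
    interpret r2: rep E F C2 using dm h ev dm_matrix_ns[OF fin] by unfold_locales auto
    show "C2 = C"
    proof (intro ext)
      fix i j
      show "C2 i j = C i j"
      proof (cases "i \<in> E \<and> j \<in> E")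
        case False thus ?thesis using h C(2) by auto
      next
        case True
        show ?thesis
        proof (cases "i = j")
          case True thus ?thesis using diag0 r2.diag0 \<open>i \<in> E \<and> j \<in> E\<close> by simp
        next
          case False
          have "C2 i j \<noteq> 0 \<longleftrightarrow> C i j \<noteq> 0"
            using pairF r2.pairF False \<open>i \<in> E \<and> j \<in> E\<close> by blast
          thus ?thesis by (metis bit_not_zero_iff)
        qed
      qed
    qed
  qed
  have tp: "twist_poly E F = (\<Sum>A\<in>Pow E. monom 1 (rk F A + rk F (E - A)))"
    unfolding twist_poly_def using width_twist[OF dm emp] by (intro sum.cong) auto
  have st: "(\<exists>(m::int) (k::nat). twist_poly E F = monom m k) \<longleftrightarrow>
            (\<exists>k. \<forall>A\<in>Pow E. rk F A + rk F (E - A) = k)"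
    unfolding tp by (rule single_term) (use fin in simp)
  show ?thesis
  proof
    assume "\<exists>(m::int) (k::nat). twist_poly E F = monom m k"
    then obtain k where k: "\<forall>A\<in>Pow E. rk F A + rk F (E - A) = k" using st by blast
    have "k = rk F E" using k[rule_format, of "{}"] rk_empty by simp
    hence hyp: "\<forall>A. A \<subseteq> E \<longrightarrow> rk F A + rk F (E - A) = rk F E" using k by auto
    have fw: "(\<forall>u\<in>E. \<forall>v\<in>E. u \<noteq> v \<longrightarrow> C u v = 1) \<and> odd (card E)"
      by (rule forward[OF con ne hyp])
    show "ig_complete_odd E F"
      unfolding ig_complete_odd_def ig_loop_def ig_adj_def RC using fw diag0 by auto
  next
    assume "ig_complete_odd E F"
    hence adj: "\<forall>u\<in>E. \<forall>v\<in>E. u \<noteq> v \<longrightarrow> C u v = 1" and odd: "odd (card E)"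
      unfolding ig_complete_odd_def ig_adj_def RC by auto
    have "\<forall>A\<in>Pow E. rk F A + rk F (E - A) = card E - 1" using backward[OF adj odd] by auto
    thus "\<exists>(m::int) (k::nat). twist_poly E F = monom m k" using st by blast
  qed
qed



end
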